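(* Let $\pi\in\mathcal P(\mathbb R^d)$ satisfy the MALA assumption with constants $\mathsf M,\mathsf L,\mathsf m$, and set $\kappa=\mathsf M/\mathsf m$. Let $\mathsf Q$ be the (subgradient) MALA proposal kernel with step size $h$, where $$0<h\le\frac{1}{200}\min\Big\{\frac{1}{d\kappa\mathsf M},\ \frac{1}{d\mathsf L^2}\Big\}.$$ Then $$\inf_{x\in\mathbb R^d}\ \mathbb E_{y\sim\mathsf Q(x,\cdot)}[\alpha(x,y)]\ >\ \frac{13}{20}.$$
   Context: MALA assumption: $\pi$ has a positive density with $\log\pi=f+g$, where $f$ is concave and differentiable with $\|\nabla f(x)-\nabla f(y)\|\le\mathsf M\|x-y\|$, $g$ satisfies $|g(x)-g(y)|\le\mathsf L\|x-y\|$, and $\pi$ is $\mathsf m$-strongly log-concave, i.e. $\log\pi(\lambda x+(1-\lambda)y)\ge\lambda\log\pi(x)+(1-\lambda)\log\pi(y)+\frac{\mathsf m}{2}\lambda(1-\lambda)\|x-y\|^2$ for all $x,y$, $\lambda\in(0,1)$. Superdifferential: $\partial\log\pi(x)=\{v\in\mathbb R^d:\ \log\pi(y)\le\log\pi(x)+v\cdot(y-x)\ \forall y\}$ (nonempty by concavity). Fix any selection $v(x)\in\partial\log\pi(x)$; then $v(x)=\nabla f(x)+v_s(x)$ with $\|v_s(x)\|\le\mathsf L$. The subgradient MALA proposal with step size $h>0$ is $\mathsf Q(x,\cdot)=\mathcal N(x+hv(x),2hI)$, i.e. $x'=x+hv(x)+\sqrt{2h}\,\xi$, $\xi\sim\mathcal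 N(0,I)$. The acceptance probability is $\alpha(x,x')=\min\{1,\frac{\pi(x')\mathsf Q(x',x)}{\pi(x)\mathsf Q(x,x')}\}$. *)

theory Defs
  imports "HOL-Analysis.Analysis"
begin

definition superdiff :: "('a::euclidean_space \<Rightarrow> real) \<Rightarrow> 'a \<Rightarrow> 'a set" where
  "superdiff F x = {w. \<forall>y. F y \<le> F x + w \<bullet> (y - x)}"

text \<open>Density of the subgradient MALA proposal Q(x,.) = N(x + h v(x), 2h I) at y, in dimension DIM('a).\<close>
definition mala_q :: "real \<Rightarrow> ('a::euclidean_space \<Rightarrow> 'a) \<Rightarrow> 'a \<Rightarrow> 'a \<Rightarrow> real" where
  "mala_q h v x y = (4 * pi * h) powr (- real DIM('a) / 2)
      * exp (- (norm (y - x - h *\<^sub>R v x))\<^sup>2 / (4 * h))"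

definition mala_alpha :: "('a::euclidean_space \<Rightarrow> real) \<Rightarrow> real \<Rightarrow> ('a \<Rightarrow> 'a) \<Rightarrow> 'a \<Rightarrow> 'a \<Rightarrow> real" where
  "mala_alpha p h v x y = min 1 ((p y * mala_q h v y x) / (p x * mala_q h v x y))"

definition mala_accept :: "('a::euclidean_space \<Rightarrow> real) \<Rightarrow> real \<Rightarrow> ('a \<Rightarrow> 'a) \<Rightarrow> 'a \<Rightarrow> real" where
  "mala_accept p h v x = integral\<^sup>L lebesgue (\<lambda>y. mala_q h v x y * mala_alpha p h v x y)"

end

theory Submission
  imports Defs "HOL-Probability.Probability"
begin
definition slr :: "('a::euclidean_space \<Rightarrow> real) \<Rightarrow> 'a \<Rightarrow> 'a \<Rightarrow> nat \<Rightarrow> real" where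
  "slr F b y n = (F (y + (1 / real (Suc n)) *\<^sub>R b) - F y) * real (Suc n)"
definition sll :: "('a::euclidean_space \<Rightarrow> real) \<Rightarrow> 'a \<Rightarrow> 'a \<Rightarrow> nat \<Rightarrow> real" where
  "sll F b y n = (F y - F (y - (1 / real (Suc n)) *\<^sub>R b)) * real (Suc n)"
definition dR :: "('a::euclidean_space \<Rightarrow> real) \<Rightarrow> 'a \<Rightarrow> 'a \<Rightarrow> real" where
  "dR F b y = (SUP n. slr F b y n)"
definition dL :: "('a::euclidean_space \<Rightarrow> real) \<Rightarrow> 'a \<Rightarrow> 'a \<Rightarrow> real" where
  "dL F b y = (INF n. sll F b y n)"

context
  fixes F :: "'a::euclidean_space \<Rightarrow> real" and v :: "'a \<Rightarrow> 'a"
  assumes sdH: "\<forall>x. v x \<in> superdiff F x"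
begin

lemma sd: "F z \<le> F y + v y \<bullet> (z - y)"
  using sdH unfolding superdiff_def by blast

lemma slr_le: "slr F b y n \<le> v y \<bullet> b"
proof -
  let ?r = "1 / real (Suc n)"
  have "F (y + ?r *\<^sub>R b) \<le> F y + v y \<bullet> (?r *\<^sub>R b)" using sd[of "y + ?r *\<^sub>R b" y] by simp
  hence "F (y + ?r *\<^sub>R b) - F y \<le> ?r * (v y \<bullet> b)" by simp
  hence "(F (y + ?r *\<^sub>R b) - F y) * real (Suc n) \<le> ?r * (v y \<bullet> b) * real (Suc n)"
    by (intro mult_right_mono) auto
  thus ?thesis unfolding slr_def by simp
qed

lemma sll_ge: "v y \<bullet> b \<le> sll F b y n"
proof -
  let ?r = "1 / real (Suc n)"
  have "F (y - ?r *\<^sub>R b) \<le> F y + v y \<bullet> (- (?r *\<^sub>R b))" using sd[of "y - ?r *\<^sub>R b" y] by simp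
  hence "?r * (v y \<bullet> b) \<le> F y - F (y - ?r *\<^sub>R b)" by simp
  hence "?r * (v y \<bullet> b) * real (Suc n) \<le> (F y - F (y - ?r *\<^sub>R b)) * real (Suc n)"
    by (intro mult_right_mono) auto
  thus ?thesis unfolding sll_def by simp
qed

lemma bdd_slr: "bdd_above (range (slr F b y))"
  by (rule bdd_aboveI2[where M="v y \<bullet> b"]) (rule slr_le)
lemma bdd_sll: "bdd_below (range (sll F b y))"
  by (rule bdd_belowI2[where m="v y \<bullet> b"]) (rule sll_ge)

lemma dR_le: "dR F b y \<le> v y \<bullet> b"
  unfolding dR_def by (rule cSUP_least) (auto intro: slr_le)
lemma dL_ge: "v y \<bullet> b \<le> dL F b y"
  unfolding dL_def by (rule cINF_greatest) (auto intro: sll_ge)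

lemma vmono: assumes "s \<le> t" shows "v (z + t *\<^sub>R b) \<bullet> b \<le> v (z + s *\<^sub>R b) \<bullet> b"
proof -
  have 1: "F (z + s *\<^sub>R b) \<le> F (z + t *\<^sub>R b) + v (z + t *\<^sub>R b) \<bullet> ((s - t) *\<^sub>R b)"
    using sd[of "z + s *\<^sub>R b" "z + t *\<^sub>R b"] by (simp add: algebra_simps)
  have 2: "F (z + t *\<^sub>R b) \<le> F (z + s *\<^sub>R b) + v (z + s *\<^sub>R b) \<bullet> ((t - s) *\<^sub>R b)"
    using sd[of "z + t *\<^sub>R b" "z + s *\<^sub>R b"] by (simp add: algebra_simps)
  from 1 2 have "(t - s) * (v (z + t *\<^sub>R b) \<bullet> b) \<le> (t - s) * (v (z + s *\<^sub>R b) \<bullet> b)"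
    by (simp add: algebra_simps)
  thus ?thesis using assms
    by (cases "s = t") (auto simp: mult_le_cancel_left)
qed

lemma dorder: assumes "s < t" shows "dL F b (z + t *\<^sub>R b) \<le> dR F b (z + s *\<^sub>R b)"
proof -
  obtain n :: nat where n: "2 / (t - s) < real n" using reals_Archimedean2 by blast
  define r where "r = 1 / real (Suc n)"
  have rpos: "r > 0" unfolding r_def by simp
  have "2 / (t - s) < real (Suc n)" using n by simp
  hence "2 < real (Suc n) * (t - s)" using assms by (simp add: field_simps)
  hence r2: "2 * r < t - s" unfolding r_def using assms by (simp add: field_simps)
  have "dL F b (z + t *\<^sub>R b) \<le> sll F b (z + t *\<^sub>R b) n"
    unfolding dL_def by (rule cINF_lower) (auto intro: bdd_sll)
  also have "\<dots> \<le> v (z + (t - r) *\<^sub>R b) \<bullet> b"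
  proof -
    have "F (z + t *\<^sub>R b) \<le> F (z + (t - r) *\<^sub>R b) + v (z + (t - r) *\<^sub>R b) \<bullet> (r *\<^sub>R b)"
      using sd[of "z + t *\<^sub>R b" "z + (t - r) *\<^sub>R b"] by (simp add: algebra_simps)
    hence "(F (z + t *\<^sub>R b) - F (z + (t - r) *\<^sub>R b)) * real (Suc n) \<le> r * (v (z + (t - r) *\<^sub>R b) \<bullet> b) * real (Suc n)"
      by (intro mult_right_mono) auto
    moreover have eq: "z + t *\<^sub>R b - r *\<^sub>R b = z + (t - r) *\<^sub>R b" by (simp add: algebra_simps)
    moreover have "r * real (Suc n) = 1" unfolding r_def by simp
    moreover have "sll F b (z + t *\<^sub>R b) n = (F (z + t *\<^sub>R b) - F (z + (t - r) *\<^sub>R b)) * real (Suc n)"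
      unfolding sll_def r_def[symmetric] eq ..
    ultimately have "sll F b (z + t *\<^sub>R b) n \<le> r * (v (z + (t - r) *\<^sub>R b) \<bullet> b) * real (Suc n)"
      by linarith
    also have "r * (v (z + (t - r) *\<^sub>R b) \<bullet> b) * real (Suc n) = (r * real (Suc n)) * (v (z + (t - r) *\<^sub>R b) \<bullet> b)"
      by (simp only: mult_ac)
    finally show ?thesis using \<open>r * real (Suc n) = 1\<close> by simp
  qed
  also have "\<dots> \<le> v (z + (s + r) *\<^sub>R b) \<bullet> b"
    using r2 rpos by (intro vmono) auto
  also have "\<dots> \<le> slr F b (z + s *\<^sub>R b) n"
  proof -
    have "F (z + s *\<^sub>R b) \<le> F (z + (s + r) *\<^sub>R b) + v (z + (s + r) *\<^sub>R b) \<bullet> (- (r *\<^sub>R b))"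
      using sd[of "z + s *\<^sub>R b" "z + (s + r) *\<^sub>R b"] by (simp add: algebra_simps)
    hence "r * (v (z + (s + r) *\<^sub>R b) \<bullet> b) * real (Suc n) \<le> (F (z + (s + r) *\<^sub>R b) - F (z + s *\<^sub>R b)) * real (Suc n)"
      by (intro mult_right_mono) auto
    moreover have eq: "z + s *\<^sub>R b + r *\<^sub>R b = z + (s + r) *\<^sub>R b" by (simp add: algebra_simps)
    moreover have "r * real (Suc n) = 1" unfolding r_def by simp
    moreover have "slr F b (z + s *\<^sub>R b) n = (F (z + (s + r) *\<^sub>R b) - F (z + s *\<^sub>R b)) * real (Suc n)"
      unfolding slr_def r_def[symmetric] eq ..
    ultimately have "r * (v (z + (s + r) *\<^sub>R b) \<bullet> b) * real (Suc n) \<le> slr F b (z + s *\<^sub>R b) n"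
      by linarith
    moreover have "r * (v (z + (s + r) *\<^sub>R b) \<bullet> b) * real (Suc n) = (r * real (Suc n)) * (v (z + (s + r) *\<^sub>R b) \<bullet> b)"
      by (simp only: mult_ac)
    ultimately show ?thesis using \<open>r * real (Suc n) = 1\<close> by (metis mult_1)
  qed
  also have "\<dots> \<le> dR F b (z + s *\<^sub>R b)"
    unfolding dR_def by (rule cSUP_upper) (auto intro: bdd_slr)
  finally show ?thesis .
qed

lemma countable_bad: "countable {t. dR F b (z + t *\<^sub>R b) < dL F b (z + t *\<^sub>R b)}"
  (is "countable ?T")
proof -
  define q where "q t = (SOME r. r \<in> \<rat> \<and> dR F b (z + t *\<^sub>R b) < r \<and> r < dL F b (z + t *\<^sub>R b))" for t
  have q: "q t \<in> \<rat> \<and> dR F b (z + t *\<^sub>R b) < q t \<and> q t < dL F b (z + t *\<^sub>R b)" if "t \<in> ?T" for t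
    unfolding q_def by (rule someI_ex) (use that Rats_dense_in_real in auto)
  have lt: "q t < q s" if "s \<in> ?T" "t \<in> ?T" "s < t" for s t
    using q[OF that(1)] q[OF that(2)] dorder[of s t b z] that(3) by linarith
  have "inj_on q ?T"
  proof (rule inj_onI)
    fix s t assume "s \<in> ?T" "t \<in> ?T" "q s = q t"
    thus "s = t" using lt[of s t] lt[of t s] by (cases s t rule: linorder_cases) auto
  qed
  moreover have "countable (q ` ?T)"
    using q by (intro countable_subset[OF _ countable_rat]) auto
  ultimately show ?thesis using countable_image_inj_on by blast
qed

end

lemma null_line:
  fixes S :: "'a::euclidean_space set" and b :: 'a
  assumes S: "S \<in> sets borel" and b: "b \<in> Basis"
    and cnt: "\<And>z. countable {t. z + t *\<^sub>R b \<in> S}"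
  shows "emeasure lborel S = 0"
proof -
  interpret P: product_sigma_finite "\<lambda>_::'a. lborel :: real measure"
    by standard
  define T where "T = (\<lambda>f. \<Sum>c\<in>Basis. f c *\<^sub>R c :: 'a)"
  have Tm[measurable]: "T \<in> borel_measurable (Pi\<^sub>M Basis (\<lambda>_. lborel))"
    unfolding T_def by measurable
  define A where "A = T -` S \<inter> space (Pi\<^sub>M Basis (\<lambda>_. lborel::real measure))"
  have Am: "A \<in> sets (Pi\<^sub>M Basis (\<lambda>_. lborel))" unfolding A_def using S Tm by measurable
  have "emeasure lborel S = emeasure (distr (Pi\<^sub>M Basis (\<lambda>_. lborel)) borel T) S"
    unfolding T_def by (subst lborel_eq) simp
  also have "\<dots> = emeasure (Pi\<^sub>M Basis (\<lambda>_. lborel)) A"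
    unfolding A_def using S Tm by (subst emeasure_distr) auto
  also have "\<dots> = (\<integral>\<^sup>+x. indicator A x \<partial>(Pi\<^sub>M Basis (\<lambda>_. lborel)))"
    using Am by simp
  also have "Basis = insert b (Basis - {b})" using b by auto
  also have "(\<integral>\<^sup>+x. indicator A x \<partial>(Pi\<^sub>M (insert b (Basis - {b})) (\<lambda>_. lborel))) =
      (\<integral>\<^sup>+ x. (\<integral>\<^sup>+ y. indicator A (x(b := y)) \<partial>lborel) \<partial>(Pi\<^sub>M (Basis - {b}) (\<lambda>_. lborel)))"
    by (rule P.product_nn_integral_insert) (use Am b in \<open>auto simp: insert_absorb\<close>)
  also have "\<dots> = 0"
  proof -
  have inner: "(\<integral>\<^sup>+ y. indicator A (x(b := y)) \<partial>lborel) = 0" if 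
         "x \<in> space (Pi\<^sub>M (Basis - {b}) (\<lambda>_. lborel::real measure))" for x
  proof -
    note x = that
    define z where "z = (\<Sum>c\<in>Basis - {b}. x c *\<^sub>R c)"
    have Tx: "T (x(b := y)) = z + y *\<^sub>R b" for y
    proof -
      have "T (x(b := y)) = (x(b:=y)) b *\<^sub>R b + (\<Sum>c\<in>Basis - {b}. (x(b:=y)) c *\<^sub>R c)"
        unfolding T_def using b by (subst sum.remove[of _ b]) auto
      also have "(\<Sum>c\<in>Basis - {b}. (x(b:=y)) c *\<^sub>R c) = z"
        unfolding z_def by (rule sum.cong) auto
      finally show ?thesis by (simp add: add.commute fun_upd_def)
    qed
    have "AE y in lborel. y \<notin> {t. z + t *\<^sub>R b \<in> S}"
      using countable_imp_null_set_lborel[OF cnt[of z]] by (rule AE_not_in)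
    hence "AE y in lborel. indicator A (x(b := y)) = (0::ennreal)"
      by eventually_elim (auto simp: A_def Tx indicator_def)
    thus "(\<integral>\<^sup>+ y. indicator A (x(b := y)) \<partial>lborel) = 0"
      by (simp add: nn_integral_cong_AE)
  qed
  show ?thesis by (subst nn_integral_cong[where v="\<lambda>_. 0"]) (auto simp: inner)
  qed
  finally show ?thesis .
qed

lemma superdiff_meas:
  fixes F :: "'a::euclidean_space \<Rightarrow> real" and v :: "'a \<Rightarrow> 'a"
  assumes Fc: "continuous_on UNIV F" and sdH: "\<forall>x. v x \<in> superdiff F x"
  shows "v \<in> borel_measurable lebesgue"
proof -
  have Fm[measurable]: "F \<in> borel_measurable borel" using Fc by (rule borel_measurable_continuous_onI)
  have slrm[measurable]: "(\<lambda>y. slr F b y n) \<in> borel_measurable borel" for b n unfolding slr_def by measurable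
  have sllm[measurable]: "(\<lambda>y. sll F b y n) \<in> borel_measurable borel" for b n unfolding sll_def by measurable
  have dRm[measurable]: "(\<lambda>y. dR F b y) \<in> borel_measurable borel" for b
    unfolding dR_def by (rule borel_measurable_cSUP) (auto simp: bdd_slr[OF sdH])
  have dLm[measurable]: "(\<lambda>y. dL F b y) \<in> borel_measurable borel" for b
    unfolding dL_def by (rule borel_measurable_cINF) (auto simp: bdd_sll[OF sdH])
  define D where "D y = (\<Sum>b\<in>Basis. dR F b y *\<^sub>R b)" for y
  have "D \<in> borel_measurable borel" unfolding D_def by measurable
  hence "D \<in> borel_measurable lborel" by simp
  hence Dm: "D \<in> borel_measurable lebesgue" by (rule measurable_completion)
  define N where "N = (\<Union>b\<in>Basis. {y. dR F b y < dL F b y})"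
  have Nb: "{y. dR F b y < dL F b y} \<in> null_sets lborel" if b: "b \<in> Basis" for b
  proof -
    have S: "{y. dR F b y < dL F b y} \<in> sets borel" by measurable
    have "emeasure lborel {y. dR F b y < dL F b y} = 0"
      by (rule null_line[OF S b]) (simp add: countable_bad[OF sdH])
    thus ?thesis using S by (auto simp: null_sets_def)
  qed
  have "N \<in> null_sets lborel" unfolding N_def using Nb by (intro null_sets.finite_UN) auto
  hence "AE y in lborel. y \<notin> N" by (rule AE_not_in)
  hence "AE y in lebesgue. y \<notin> N" by (rule AE_completion)
  hence "AE y in lebesgue. D y = v y"
  proof eventually_elim
    fix y assume y: "y \<notin> N"
    have "dR F b y = v y \<bullet> b" if "b \<in> Basis" for b
      using y that dR_le[OF sdH, of b y] dL_ge[OF sdH, of y b] unfolding N_def by force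
    hence "D y = (\<Sum>b\<in>Basis. (v y \<bullet> b) *\<^sub>R b)" unfolding D_def by (intro sum.cong) auto
    thus "D y = v y" by (simp add: euclidean_representation)
  qed
  thus ?thesis by (rule borel_measurable_AE[OF Dm])
qed

definition Gd :: "real \<Rightarrow> 'a::euclidean_space \<Rightarrow> 'a \<Rightarrow> real" where
  "Gd s c y = (\<Prod>b\<in>Basis. normal_density (c \<bullet> b) s (y \<bullet> b))"

lemma norm_sq_basis:
  fixes w :: "'a::euclidean_space"
  shows "(norm w)\<^sup>2 = (\<Sum>b\<in>Basis. (w \<bullet> b)\<^sup>2)"
  unfolding power2_norm_eq_inner by (subst euclidean_inner) (simp add: power2_eq_square)

lemma nd_sqrt:
  assumes h: "0 < h"
  shows "normal_density m (sqrt (2*h)) t = 1 / sqrt (4 * pi * h) * exp (- (t - m)\<^sup>2 / (4 * h))"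
proof -
  have s2: "(sqrt (2*h))\<^sup>2 = 2*h" using h by simp
  have e1: "2 * pi * (2 * h) = 4 * pi * h" "2 * (2 * h) = 4 * h" by simp_all
  show ?thesis unfolding normal_density_def s2 e1 ..
qed

lemma Gd_eq:
  fixes c :: "'a::euclidean_space"
  assumes h: "0 < h"
  shows "Gd (sqrt (2*h)) c y = (4 * pi * h) powr (- real DIM('a) / 2) * exp (- (norm (y - c))\<^sup>2 / (4 * h))"
    (is "?L = ?R")
proof -
  have "?L = (\<Prod>b\<in>Basis. (1 / sqrt (4 * pi * h)) * exp (- (y \<bullet> b - c \<bullet> b)\<^sup>2 / (4 * h)))"
    unfolding Gd_def nd_sqrt[OF h] ..
  also have "\<dots> = (1 / sqrt (4 * pi * h)) ^ DIM('a) * exp (\<Sum>b\<in>Basis. - (y \<bullet> b - c \<bullet> b)\<^sup>2 / (4 * h))"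
    by (simp only: prod.distrib exp_sum[OF finite_Basis] prod_constant)
  also have "(\<Sum>b\<in>Basis. - (y \<bullet> b - c \<bullet> b)\<^sup>2 / (4 * h)) = - (norm (y - c))\<^sup>2 / (4 * h)"
    unfolding norm_sq_basis inner_diff_left by (simp add: sum_divide_distrib[symmetric] sum_negf)
  also have "(1 / sqrt (4 * pi * h)) ^ DIM('a) = (4 * pi * h) powr (- real DIM('a) / 2)"
  proof -
    have p: "0 < 4 * pi * h" using h by simp
    have "(1 / sqrt (4 * pi * h)) ^ DIM('a) = ((4 * pi * h) powr (-1/2)) ^ DIM('a)"
      using p by (simp add: powr_minus_divide powr_half_sqrt)
    also have "\<dots> = ((4 * pi * h) powr (-1/2)) powr (real DIM('a))"
      using p by (subst powr_realpow) auto
    also have "\<dots> = (4 * pi * h) powr (-1/2 * real DIM('a))"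
      by (rule powr_powr)
    also have "-1/2 * real DIM('a) = - real DIM('a) / 2" by simp
    finally show ?thesis .
  qed
  finally show ?thesis .
qed

lemma Gd_nonneg: "0 \<le> Gd s c y"
  unfolding Gd_def by (intro prod_nonneg) auto

lemma Gd_meas[measurable]: "(\<lambda>y. Gd s c y) \<in> borel_measurable borel"
  unfolding Gd_def by measurable

lemma nn_nd1: "0 < s \<Longrightarrow> (\<integral>\<^sup>+ t. ennreal (normal_density m s t) \<partial>lborel) = 1"
  by (subst nn_integral_eq_integral) auto

lemma Gd_int1:
  assumes s: "0 < s"
  shows "has_bochner_integral lborel (\<lambda>y. Gd s c y) 1"
proof (rule has_bochner_integral_nn_integral)
  show "(\<integral>\<^sup>+ y. ennreal (Gd s c y) \<partial>lborel) = ennreal 1"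
  proof -
    have "(\<integral>\<^sup>+ y. ennreal (Gd s c y) \<partial>lborel) =
        (\<integral>\<^sup>+ y. (\<Prod>b\<in>Basis. ennreal (normal_density (c \<bullet> b) s (y \<bullet> b))) \<partial>lborel)"
      unfolding Gd_def by (subst prod_ennreal) auto
    also have "\<dots> = (\<Prod>b\<in>Basis. (\<integral>\<^sup>+ t. ennreal (normal_density (c \<bullet> b) s t) \<partial>lborel))"
      by (rule nn_integral_lborel_prod) auto
    also have "\<dots> = 1" by (simp add: nn_nd1[OF s])
    finally show ?thesis by simp
  qed
next
  show "(\<lambda>y. Gd s c y) \<in> borel_measurable lborel" using Gd_meas by simp
next
  show "AE x in lborel. 0 \<le> Gd s c x" by (intro AE_I2 Gd_nonneg)
qed simp

lemma nn_nd2: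
  assumes "0 < s"
  shows "(\<integral>\<^sup>+ t. ennreal (normal_density m s t * (t - m)\<^sup>2) \<partial>lborel) = ennreal (s\<^sup>2)"
proof -
  have hb: "has_bochner_integral lborel (\<lambda>t. normal_density m s t * (t - m) ^ (2 * 1)) (fact (2 * 1) / ((2 / s\<^sup>2)^1 * fact 1))"
    using normal_moment_even[OF assms, of m 1] .
  have e: "fact (2 * 1) / ((2 / s\<^sup>2)^1 * fact 1) = (s\<^sup>2 :: real)" using assms by (simp add: fact_numeral)
  from hb e have hb2: "has_bochner_integral lborel (\<lambda>t. normal_density m s t * (t - m)\<^sup>2) (s\<^sup>2)" by simp
  show ?thesis
    using hb2 by (subst nn_integral_eq_integral) (auto simp: has_bochner_integral_iff)
qed

lemma prod_int_basis:
  fixes f :: "'a::euclidean_space \<Rightarrow> real \<Rightarrow> real"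
  assumes fm: "\<And>b. (\<lambda>t. ennreal (f b t)) \<in> borel_measurable borel" and fnn: "\<And>b t. 0 \<le> f b t"
  shows "(\<integral>\<^sup>+ y. ennreal (\<Prod>b\<in>Basis. f b (y \<bullet> b)) \<partial>lborel) = (\<Prod>b\<in>Basis. \<integral>\<^sup>+ t. ennreal (f b t) \<partial>lborel)"
proof -
  have e: "ennreal (\<Prod>b\<in>Basis. f b (y \<bullet> b)) = (\<Prod>b\<in>Basis. ennreal (f b (y \<bullet> b)))" for y
    by (rule prod_ennreal[symmetric]) (rule fnn)
  show ?thesis unfolding e
    by (rule nn_integral_lborel_prod[of "\<lambda>b t. ennreal (f b t)"]) (simp_all add: fm)
qed

lemma Gd_int2:
  fixes c :: "'a::euclidean_space"
  assumes s: "0 < s"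
  shows "has_bochner_integral lborel (\<lambda>y. Gd s c y * (norm (y - c))\<^sup>2) (real DIM('a) * s\<^sup>2)"
proof (rule has_bochner_integral_nn_integral)
  show "(\<integral>\<^sup>+ y. ennreal (Gd s c y * (norm (y - c))\<^sup>2) \<partial>lborel) = ennreal (real DIM('a) * s\<^sup>2)"
  proof -
    define f where "f j b t = normal_density (c \<bullet> b) s t * (if b = j then (t - c \<bullet> b)\<^sup>2 else 1)"
      for j b :: 'a and t
    have pw: "Gd s c y * (norm (y - c))\<^sup>2 = (\<Sum>j\<in>Basis. \<Prod>b\<in>Basis. f j b (y \<bullet> b))" for y
    proof -
      have "(\<Prod>b\<in>Basis. f j b (y \<bullet> b)) = Gd s c y * ((y - c) \<bullet> j)\<^sup>2" if j: "j \<in> Basis" for j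
      proof -
        have "(\<Prod>b\<in>Basis. f j b (y \<bullet> b)) = (\<Prod>b\<in>Basis. normal_density (c \<bullet> b) s (y \<bullet> b)) *
            (\<Prod>b\<in>Basis. if b = j then (y \<bullet> b - c \<bullet> b)\<^sup>2 else 1)"
          unfolding f_def by (rule prod.distrib)
        also have "\<dots> = Gd s c y * (y \<bullet> j - c \<bullet> j)\<^sup>2" using j by (simp add: Gd_def)
        finally show ?thesis by (simp add: inner_diff_left)
      qed
      hence "(\<Sum>j\<in>Basis. \<Prod>b\<in>Basis. f j b (y \<bullet> b)) = (\<Sum>j\<in>Basis. Gd s c y * ((y - c) \<bullet> j)\<^sup>2)"
        by (intro sum.cong) auto
      thus ?thesis by (simp add: norm_sq_basis sum_distrib_left)
    qed
    have fnn: "0 \<le> f j b t" for j b t unfolding f_def by auto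
    have fm: "(\<lambda>t. ennreal (f j b t)) \<in> borel_measurable borel" for j b unfolding f_def by measurable
    have inner: "(\<integral>\<^sup>+ y. ennreal (\<Prod>b\<in>Basis. f j b (y \<bullet> b)) \<partial>lborel) = ennreal (s\<^sup>2)" if j: "j \<in> Basis" for j
    proof -
      have "(\<integral>\<^sup>+ y. ennreal (\<Prod>b\<in>Basis. f j b (y \<bullet> b)) \<partial>lborel) = (\<Prod>b\<in>Basis. (\<integral>\<^sup>+ t. ennreal (f j b t) \<partial>lborel))"
        by (rule prod_int_basis[OF fm fnn])
      also have "\<dots> = (\<Prod>b\<in>Basis. (if b = j then ennreal (s\<^sup>2) else 1))"
      proof (rule prod.cong[OF refl])
        fix b :: 'a
        show "(\<integral>\<^sup>+ t. ennreal (f j b t) \<partial>lborel) = (if b = j then ennreal (s\<^sup>2) else 1)"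
        proof (cases "b = j")
          case True
          hence "f j b t = normal_density (c \<bullet> b) s t * (t - c \<bullet> b)\<^sup>2" for t unfolding f_def by simp
          thus ?thesis using True nn_nd2[OF s, of "c \<bullet> b"] by simp
        next
          case False
          hence "f j b t = normal_density (c \<bullet> b) s t" for t unfolding f_def by simp
          thus ?thesis using False nn_nd1[OF s, of "c \<bullet> b"] by simp
        qed
      qed
      also have "\<dots> = ennreal (s\<^sup>2)" using j by simp
      finally show "(\<integral>\<^sup>+ y. ennreal (\<Prod>b\<in>Basis. f j b (y \<bullet> b)) \<partial>lborel) = ennreal (s\<^sup>2)" .
    qed
    have "(\<integral>\<^sup>+ y. ennreal (Gd s c y * (norm (y - c))\<^sup>2) \<partial>lborel) =
        (\<integral>\<^sup>+ y. (\<Sum>j\<in>Basis. ennreal (\<Prod>b\<in>Basis. f j b (y \<bullet> b))) \<partial>lborel)"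
    proof -
      have "ennreal (Gd s c y * (norm (y - c))\<^sup>2) = (\<Sum>j\<in>Basis. ennreal (\<Prod>b\<in>Basis. f j b (y \<bullet> b)))" for y
        unfolding pw by (rule sum_ennreal[symmetric]) (intro prod_nonneg fnn)
      thus ?thesis by simp
    qed
    also have "\<dots> = (\<Sum>j\<in>Basis. (\<integral>\<^sup>+ y. ennreal (\<Prod>b\<in>Basis. f j b (y \<bullet> b)) \<partial>lborel))"
      by (rule nn_integral_sum) (unfold f_def, measurable)
    also have "\<dots> = (\<Sum>j\<in>(Basis::'a set). ennreal (s\<^sup>2))"
      by (rule sum.cong) (auto simp: inner)
    also have "\<dots> = ennreal (real DIM('a) * s\<^sup>2)"
      by (simp add: ennreal_mult' ennreal_of_nat_eq_real_of_nat)
    finally show ?thesis .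
  qed
next
  have "(\<lambda>y. Gd s c y * (norm (y - c))\<^sup>2) \<in> borel_measurable borel"
    by (intro borel_measurable_times Gd_meas) simp
  thus "(\<lambda>y. Gd s c y * (norm (y - c))\<^sup>2) \<in> borel_measurable lborel" by simp
next
  show "AE x in lborel. 0 \<le> Gd s c x * (norm (x - c))\<^sup>2"
    by (intro AE_I2 mult_nonneg_nonneg Gd_nonneg) simp
  show "0 \<le> real DIM('a) * s\<^sup>2" by simp
qed

lemma scalar_bound:
  fixes h d m M L E U Zn ez :: real
  assumes h: "0 < h" and d: "1 \<le> d" and m: "0 < m"
    and h1: "200 * h * d * (M / m) * M \<le> 1" and h2: "200 * h * d * L\<^sup>2 \<le> 1"
    and E0: "0 \<le> E" and EB: "E \<le> M * U + 2 * L" and U0: "0 \<le> U" and Z0: "0 \<le> Zn"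
    and ez: "ez \<le> E * Zn"
  shows "- h * E\<^sup>2 / 4 - ez / 2 + m / 2 * U\<^sup>2 \<ge> - 6/100 - 21/800 * (Zn\<^sup>2 / (h * d))"
proof -
  have hd: "0 < h * d" using h d by simp
  have hne: "h \<noteq> 0" "d \<noteq> 0" using h d by auto
  have a1: "E\<^sup>2 \<le> (M * U + 2 * L)\<^sup>2" using E0 EB by (intro power_mono) auto
  have a2: "(M * U + 2 * L)\<^sup>2 \<le> 2 * (M * U)\<^sup>2 + 8 * L\<^sup>2"
    using sum_squares_ge_zero[of "M*U - 2*L" 0] by (simp add: power2_eq_square algebra_simps)
  have hM: "h * M\<^sup>2 \<le> m / 200"
  proof -
    have "200 * h * d * M\<^sup>2 \<le> m" using h1 m by (simp add: field_simps power2_eq_square)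
    moreover have "h * M\<^sup>2 \<le> h * d * M\<^sup>2" using h d by (intro mult_right_mono) auto
    ultimately show ?thesis by simp
  qed
  have b: "h * E\<^sup>2 / 4 \<le> h * M\<^sup>2 * U\<^sup>2 / 2 + 2 * h * L\<^sup>2"
  proof -
    have "h * E\<^sup>2 \<le> h * (2 * (M * U)\<^sup>2 + 8 * L\<^sup>2)" using a1 a2 h by (intro mult_left_mono) auto
    thus ?thesis by (simp add: power_mult_distrib algebra_simps)
  qed
  have c: "h * M\<^sup>2 * U\<^sup>2 / 2 \<le> m * U\<^sup>2 / 400"
    using mult_right_mono[OF hM, of "U\<^sup>2"] by simp
  have d1: "ez \<le> M * U * Zn + 2 * L * Zn"
    using ez mult_right_mono[OF EB Z0] by (simp add: algebra_simps)
  have e: "M * U * Zn \<le> m / 2 * U\<^sup>2 + M\<^sup>2 * Zn\<^sup>2 / (2 * m)"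
  proof -
    have "0 \<le> (m * U - M * Zn)\<^sup>2 / m" using m by simp
    also have "(m * U - M * Zn)\<^sup>2 / m = m * U\<^sup>2 - 2 * M * U * Zn + M\<^sup>2 * Zn\<^sup>2 / m"
      using m by (simp add: power2_eq_square field_simps)
    finally show ?thesis using m by (simp add: field_simps)
  qed
  have f0: "M\<^sup>2 / m \<le> 1 / (200 * h * d)"
    using h1 m hd by (simp add: field_simps power2_eq_square)
  have f: "M\<^sup>2 * Zn\<^sup>2 / (4 * m) \<le> 1/800 * (Zn\<^sup>2 / (h * d))"
  proof -
    have "M\<^sup>2 / m * Zn\<^sup>2 \<le> 1 / (200 * h * d) * Zn\<^sup>2" by (rule mult_right_mono[OF f0]) simp
    thus ?thesis by (simp add: field_simps)
  qed
  have g: "L * Zn \<le> 10 * h * d * L\<^sup>2 + 1/40 * (Zn\<^sup>2 / (h * d))"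
  proof -
    have "0 \<le> (20 * h * d * L - Zn)\<^sup>2 / (40 * h * d)" using hd by (intro divide_nonneg_pos zero_le_power2) (auto simp: mult.commute)
    also have "(20 * h * d * L - Zn)\<^sup>2 / (40 * h * d) = 10 * h * d * L\<^sup>2 - L * Zn + 1/40 * (Zn\<^sup>2 / (h * d))"
      using hne by (simp add: power2_eq_square field_simps)
    finally show ?thesis by simp
  qed
  have g2: "10 * h * d * L\<^sup>2 \<le> 5/100" using h2 by simp
  have h3: "2 * h * L\<^sup>2 \<le> 1/100"
  proof -
    have "2 * h * L\<^sup>2 \<le> 2 * h * d * L\<^sup>2" using h d by (intro mult_right_mono) (auto simp: mult_left_le)
    thus ?thesis using h2 by simp
  qed
  have mU: "0 \<le> m * U\<^sup>2" using m by simp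
  show ?thesis using b c d1 e f g g2 h3 mU by (simp add: field_simps)
qed

lemma L_nonneg:
  fixes g :: "'a::euclidean_space \<Rightarrow> real"
  assumes g_lip: "\<forall>x y. \<bar>g x - g y\<bar> \<le> L * norm (x - y)"
  shows "0 \<le> L"
proof -
  obtain b :: 'a where b: "b \<in> Basis" using nonempty_Basis by blast
  have "\<bar>g b - g 0\<bar> \<le> L * norm (b - 0)" using g_lip by blast
  thus ?thesis using b by simp
qed

lemma v_gf_close:
  fixes p f g :: "'a::euclidean_space \<Rightarrow> real" and gf v :: "'a \<Rightarrow> 'a"
  assumes logp: "\<forall>x. ln (p x) = f x + g x"
    and f_grad: "\<forall>x. (f has_derivative (\<lambda>u. gf x \<bullet> u)) (at x)"
    and g_lip: "\<forall>x y. \<bar>g x - g y\<bar> \<le> L * norm (x - y)"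
    and v_sel: "\<forall>x. v x \<in> superdiff (\<lambda>z. ln (p z)) x"
  shows "norm (v x - gf x) \<le> L"
proof -
  define w where "w = gf x - v x"
  have q: "(f (x + t *\<^sub>R w) - f x) / t \<le> v x \<bullet> w + L * norm w" if t: "0 < t" for t
  proof -
    have "ln (p (x + t *\<^sub>R w)) \<le> ln (p x) + v x \<bullet> (x + t *\<^sub>R w - x)"
      using v_sel unfolding superdiff_def by blast
    hence 1: "f (x + t *\<^sub>R w) + g (x + t *\<^sub>R w) \<le> f x + g x + t * (v x \<bullet> w)" using logp by simp
    have "\<bar>g (x + t *\<^sub>R w) - g x\<bar> \<le> L * norm (x + t *\<^sub>R w - x)" using g_lip by blast
    hence 2: "- (L * (t * norm w)) \<le> g (x + t *\<^sub>R w) - g x" using t by simp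
    have "f (x + t *\<^sub>R w) - f x \<le> t * (v x \<bullet> w + L * norm w)" using 1 2 by (simp add: algebra_simps)
    thus ?thesis using t by (simp add: field_simps)
  qed
  have lim: "((\<lambda>t. (f (x + t *\<^sub>R w) - f x) / t) \<longlongrightarrow> gf x \<bullet> w) (at_right 0)"
  proof -
    have d1: "((\<lambda>t. x + t *\<^sub>R w) has_derivative (\<lambda>t. t *\<^sub>R w)) (at 0 within {0<..})"
      by (auto intro!: derivative_eq_intros)
    have d2: "(f has_derivative (\<lambda>u. gf x \<bullet> u)) (at (x + 0 *\<^sub>R w))" using f_grad by simp
    have "((\<lambda>t. f (x + t *\<^sub>R w)) has_derivative (\<lambda>t. gf x \<bullet> (t *\<^sub>R w))) (at 0 within {0<..})"
      using has_derivative_compose[OF d1 d2] by simp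
    moreover have "(\<lambda>t. gf x \<bullet> (t *\<^sub>R w)) = (*) (gf x \<bullet> w)" by (auto simp: fun_eq_iff)
    ultimately have "((\<lambda>t. f (x + t *\<^sub>R w)) has_field_derivative (gf x \<bullet> w)) (at 0 within {0<..})"
      by (simp add: has_field_derivative_def)
    thus ?thesis by (simp add: has_field_derivative_iff)
  qed
  have "gf x \<bullet> w \<le> v x \<bullet> w + L * norm w"
    by (rule tendsto_upperbound[OF lim]) (auto intro: eventually_mono[OF eventually_at_right_less] q)
  hence "w \<bullet> w \<le> L * norm w" unfolding w_def by (simp add: inner_diff_left)
  hence "norm w * norm w \<le> L * norm w" by (simp add: norm_eq_sqrt_inner real_sqrt_mult_self[symmetric] power2_eq_square[symmetric])
  hence "norm w \<le> L" using L_nonneg[OF g_lip]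
    by (cases "norm w = 0") (auto simp: mult_le_cancel_right)
  thus ?thesis unfolding w_def by (simp add: norm_minus_commute)
qed

lemma strong_sg:
  fixes F :: "'a::euclidean_space \<Rightarrow> real" and v :: "'a \<Rightarrow> 'a"
  assumes strong: "\<forall>x y lam. 0 < lam \<and> lam < 1 \<longrightarrow>
        F (lam *\<^sub>R x + (1 - lam) *\<^sub>R y) \<ge> lam * F x + (1 - lam) * F y + m / 2 * lam * (1 - lam) * (norm (x - y))\<^sup>2"
    and sd: "v y \<in> superdiff F y"
  shows "F x \<le> F y + v y \<bullet> (x - y) - m / 2 * (norm (x - y))\<^sup>2"
proof -
  define D where "D = (norm (x - y))\<^sup>2"
  define B where "B = v y \<bullet> (x - y)"
  have ineq: "F x - F y + m / 2 * (1 - l) * D \<le> B" if l: "0 < l" "l < 1" for l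
  proof -
    have 1: "F (l *\<^sub>R x + (1 - l) *\<^sub>R y) \<ge> l * F x + (1 - l) * F y + m / 2 * l * (1 - l) * D"
      using strong l unfolding D_def by blast
    have "F (l *\<^sub>R x + (1 - l) *\<^sub>R y) \<le> F y + v y \<bullet> (l *\<^sub>R x + (1 - l) *\<^sub>R y - y)"
      using sd unfolding superdiff_def by blast
    also have "l *\<^sub>R x + (1 - l) *\<^sub>R y - y = l *\<^sub>R (x - y)" by (simp add: algebra_simps)
    finally have 2: "F (l *\<^sub>R x + (1 - l) *\<^sub>R y) \<le> F y + l * B" unfolding B_def by simp
    from 1 2 have "l * (F x - F y + m / 2 * (1 - l) * D) \<le> l * B" by (simp add: algebra_simps)
    thus ?thesis using l by simp
  qed
  have lim: "((\<lambda>l. F x - F y + m / 2 * (1 - l) * D) \<longlongrightarrow> F x - F y + m / 2 * (1 - 0) * D) (at_right 0)"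
    by (intro tendsto_intros)
  have ev: "eventually (\<lambda>l. F x - F y + m / 2 * (1 - l) * D \<le> B) (at_right (0::real))"
  proof -
    have "\<exists>b>(0::real). \<forall>l>0. l < b \<longrightarrow> F x - F y + m / 2 * (1 - l) * D \<le> B"
      using ineq zero_less_one by blast
    thus ?thesis by (simp only: eventually_at_right_field)
  qed
  have "F x - F y + m / 2 * (1 - 0) * D \<le> B" by (rule tendsto_upperbound[OF lim ev]) simp
  thus ?thesis unfolding B_def D_def by simp
qed

lemma vec_identity:
  fixes a b u :: "'a::real_inner" and h :: real
  assumes h: "0 < h"
  shows "b \<bullet> u - ((norm (u + h *\<^sub>R b))\<^sup>2 - (norm (u - h *\<^sub>R a))\<^sup>2) / (4 * h)
       = - h * (norm (a - b))\<^sup>2 / 4 - (a - b) \<bullet> (u - h *\<^sub>R a) / 2"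
proof -
  have e1: "(norm (u + h *\<^sub>R b))\<^sup>2 = u \<bullet> u + 2 * h * (u \<bullet> b) + h\<^sup>2 * (b \<bullet> b)"
    unfolding power2_norm_eq_inner by (simp add: inner_add_left inner_add_right inner_commute power2_eq_square algebra_simps)
  have e2: "(norm (u - h *\<^sub>R a))\<^sup>2 = u \<bullet> u - 2 * h * (u \<bullet> a) + h\<^sup>2 * (a \<bullet> a)"
    unfolding power2_norm_eq_inner by (simp add: inner_diff_left inner_diff_right inner_commute power2_eq_square algebra_simps)
  have e3: "(norm (a - b))\<^sup>2 = a \<bullet> a - 2 * (a \<bullet> b) + b \<bullet> b"
    unfolding power2_norm_eq_inner by (simp add: inner_diff_left inner_diff_right inner_commute algebra_simps)
  have e4: "(a - b) \<bullet> (u - h *\<^sub>R a) = u \<bullet> a - u \<bullet> b - h * (a \<bullet> a) + h * (a \<bullet> b)"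
    by (simp add: inner_diff_left inner_diff_right inner_commute algebra_simps)
  show ?thesis unfolding e1 e2 e3 e4 using h
    by (simp add: inner_commute[of b u] field_simps power2_eq_square)
qed

lemma qa_meas:
  fixes v :: "'a::euclidean_space \<Rightarrow> 'a" and p :: "'a \<Rightarrow> real"
  assumes h: "0 < h" and vm: "v \<in> borel_measurable lebesgue" and pm: "p \<in> borel_measurable lebesgue"
  shows "(\<lambda>y. mala_q h v x y * mala_alpha p h v x y) \<in> borel_measurable lebesgue"
proof -
  define K where "K = (4 * pi * h) powr (- real DIM('a) / 2)"
  have Pc: "continuous_on UNIV (\<lambda>w::'a. K * exp (- (norm w)\<^sup>2 / (4 * h)))"
    by (intro continuous_intros) (use h in auto)
  have idm: "(\<lambda>y::'a. y) \<in> borel_measurable lebesgue"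
    using id_borel_measurable_lebesgue by (simp add: id_def)
  have m1: "(\<lambda>y. y - x - h *\<^sub>R v x) \<in> borel_measurable lebesgue"
    by (intro borel_measurable_diff idm borel_measurable_const)
  have m2: "(\<lambda>y. x - y - h *\<^sub>R v y) \<in> borel_measurable lebesgue"
    by (intro borel_measurable_diff borel_measurable_scaleR idm borel_measurable_const vm)
  have f1: "(\<lambda>y. mala_q h v x y) \<in> borel_measurable lebesgue"
    using borel_measurable_continuous_on[OF Pc m1] unfolding mala_q_def K_def .
  have f2: "(\<lambda>y. mala_q h v y x) \<in> borel_measurable lebesgue"
    using borel_measurable_continuous_on[OF Pc m2] unfolding mala_q_def K_def .
  show ?thesis unfolding mala_alpha_def
    by (intro borel_measurable_times borel_measurable_min borel_measurable_divide borel_measurable_const f1 f2 pm)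
qed

theorem mainTheorem6:
  fixes p :: "'a::euclidean_space \<Rightarrow> real"
    and f g :: "'a \<Rightarrow> real"
    and gf v :: "'a \<Rightarrow> 'a"
    and M L m h :: real
  assumes p_pos: "\<forall>x. p x > 0"
    and p_prob: "(p has_integral 1) UNIV"
    and logp: "\<forall>x. ln (p x) = f x + g x"
    and f_concave: "concave_on UNIV f"
    and f_grad: "\<forall>x. (f has_derivative (\<lambda>u. gf x \<bullet> u)) (at x)"
    and f_smooth: "\<forall>x y. norm (gf x - gf y) \<le> M * norm (x - y)"
    and g_lip: "\<forall>x y. \<bar>g x - g y\<bar> \<le> L * norm (x - y)"
    and m_pos: "m > 0"
    and strong: "\<forall>x y lam. 0 < lam \<and> lam < 1 \<longrightarrow>
        ln (p (lam *\<^sub>R x + (1 - lam) *\<^sub>R y)) \<ge>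
          lam * ln (p x) + (1 - lam) * ln (p y) + m / 2 * lam * (1 - lam) * (norm (x - y))\<^sup>2"
    and v_sel: "\<forall>x. v x \<in> superdiff (\<lambda>z. ln (p z)) x"
    and h_pos: "0 < h"
    and h_le1: "200 * h * real DIM('a) * (M / m) * M \<le> 1"
    and h_le2: "200 * h * real DIM('a) * L\<^sup>2 \<le> 1"
  shows "(INF x. mala_accept p h v x) > 13 / 20"
proof -
  define F where "F z = ln (p z)" for z
  have Feq: "F = (\<lambda>z. ln (p z))" by (simp add: F_def fun_eq_iff)
  define d where "d = real DIM('a)"
  have d1: "1 \<le> d" unfolding d_def by (simp add: DIM_positive Suc_le_eq)
  have L0: "0 \<le> L" using L_nonneg[OF g_lip] .
  have fc: "continuous_on UNIV f"
    using f_grad by (intro continuous_at_imp_continuous_on ballI has_derivative_continuous) auto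
  have gc: "continuous_on UNIV g"
  proof -
    have "lipschitz_on L UNIV g" unfolding lipschitz_on_def using L0 g_lip by (auto simp: dist_norm dist_real_def)
    thus ?thesis by (rule lipschitz_on_continuous_on)
  qed
  have Fc: "continuous_on UNIV F"
  proof -
    have "F = (\<lambda>z. f z + g z)" using logp unfolding F_def by auto
    thus ?thesis using fc gc by (simp add: continuous_on_add)
  qed
  have pF: "p z = exp (F z)" for z unfolding F_def using p_pos by simp
  have vm[measurable]: "v \<in> borel_measurable lebesgue"
    by (rule superdiff_meas[OF Fc]) (use v_sel in \<open>simp add: Feq\<close>)
  have peq: "p = (\<lambda>z. exp (F z))" using pF by auto
  have "p \<in> borel_measurable borel"
    unfolding peq by (rule borel_measurable_continuous_onI) (rule continuous_on_exp[OF Fc])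
  hence "p \<in> borel_measurable lborel" by simp
  hence pm[measurable]: "p \<in> borel_measurable lebesgue" by (rule measurable_completion)
  define s where "s = sqrt (2 * h)"
  have s0: "0 < s" unfolding s_def using h_pos by simp
  have s2: "s\<^sup>2 = 2 * h" unfolding s_def using h_pos by simp
  define k where "k = 21 / (800 * h * d)"
  have bound: "71 / 80 \<le> mala_accept p h v x" for x
  proof -
    define a where "a = v x"
    define c where "c = x + h *\<^sub>R a"
    have qG: "mala_q h v x y = Gd s c y" for y
      unfolding mala_q_def s_def Gd_eq[OF h_pos] c_def a_def by (simp add: algebra_simps)
    have qnn: "0 \<le> mala_q h v y z" for y z unfolding mala_q_def by simp
    have qpos: "0 < mala_q h v y z" for y z unfolding mala_q_def using h_pos by simp
    have alpha01: "0 \<le> mala_alpha p h v x y \<and> mala_alpha p h v x y \<le> 1" for y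
    proof -
      have "0 \<le> p y * mala_q h v y x / (p x * mala_q h v x y)"
        using p_pos by (intro divide_nonneg_nonneg mult_nonneg_nonneg qnn) (auto simp: less_imp_le)
      thus ?thesis unfolding mala_alpha_def by auto
    qed
    have lower: "Gd s c y * (47/50 - k * (norm (y - c))\<^sup>2) \<le> mala_q h v x y * mala_alpha p h v x y" for y
    proof -
      define b where "b = v y"
      define u where "u = y - x"
      define z where "z = y - c"
      have zu: "z = u - h *\<^sub>R a" unfolding z_def u_def c_def by (simp add: algebra_simps)
      define R where "R = F y - F x - ((norm (u + h *\<^sub>R b))\<^sup>2 - (norm z)\<^sup>2) / (4 * h)"
      have ratio: "p y * mala_q h v y x / (p x * mala_q h v x y) = exp R"
      proof -
        have n1: "norm (x - y - h *\<^sub>R v y) = norm (u + h *\<^sub>R b)"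
          unfolding u_def b_def by (metis minus_diff_eq norm_minus_cancel diff_diff_eq diff_add_eq add_uminus_conv_diff)
        have n2: "norm (y - x - h *\<^sub>R v x) = norm z" unfolding z_def c_def a_def by (simp add: algebra_simps)
        define K where "K = (4 * pi * h) powr (- real DIM('a) / 2)"
        have K0: "0 < K" unfolding K_def using h_pos by simp
        have "p y * mala_q h v y x / (p x * mala_q h v x y) =
            (exp (F y) * (K * exp (- (norm (u + h *\<^sub>R b))\<^sup>2 / (4 * h)))) / (exp (F x) * (K * exp (- (norm z)\<^sup>2 / (4 * h))))"
          unfolding mala_q_def pF n1 n2 K_def ..
        also have "\<dots> = exp (F y - (norm (u + h *\<^sub>R b))\<^sup>2 / (4 * h)) / exp (F x - (norm z)\<^sup>2 / (4 * h))"
          using K0 by (simp add: exp_diff exp_minus field_simps)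
        also have "\<dots> = exp R" unfolding R_def using h_pos by (simp add: exp_diff[symmetric] diff_divide_distrib)
        finally show ?thesis .
      qed
      have SG: "F x \<le> F y + b \<bullet> (x - y) - m / 2 * (norm (x - y))\<^sup>2"
        unfolding b_def by (rule strong_sg[where v=v]) (use strong v_sel in \<open>simp_all add: Feq\<close>)
      have SG2: "b \<bullet> u + m / 2 * (norm u)\<^sup>2 \<le> F y - F x"
      proof -
        have "b \<bullet> (x - y) = - (b \<bullet> u)" unfolding u_def by (simp add: inner_diff_right)
        moreover have "norm (x - y) = norm u" unfolding u_def by (simp add: norm_minus_commute)
        ultimately show ?thesis using SG by simp
      qed
      have Rlow: "m / 2 * (norm u)\<^sup>2 - h * (norm (a - b))\<^sup>2 / 4 - (a - b) \<bullet> z / 2 \<le> R"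
        using SG2 vec_identity[OF h_pos, of b u a] unfolding R_def zu by linarith
      have E: "norm (a - b) \<le> M * norm u + 2 * L"
      proof -
        have ab: "a - b = (a - gf x) + ((gf x - gf y) + (gf y - b))" by simp
        have "norm (a - b) \<le> norm (a - gf x) + norm ((gf x - gf y) + (gf y - b))"
          unfolding ab by (rule norm_triangle_ineq)
        also have "norm ((gf x - gf y) + (gf y - b)) \<le> norm (gf x - gf y) + norm (gf y - b)"
          by (rule norm_triangle_ineq)
        finally have "norm (a - b) \<le> norm (a - gf x) + norm (gf x - gf y) + norm (gf y - b)" by simp
        moreover have "norm (a - gf x) \<le> L" unfolding a_def by (rule v_gf_close[OF logp f_grad g_lip v_sel])
        moreover have "norm (gf y - b) \<le> L" unfolding b_def
          using v_gf_close[OF logp f_grad g_lip v_sel, of y] by (simp add: norm_minus_commute)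
        moreover have "norm (gf x - gf y) \<le> M * norm u" using f_smooth unfolding u_def by (simp add: norm_minus_commute)
        ultimately show ?thesis by linarith
      qed
      have CS: "(a - b) \<bullet> z \<le> norm (a - b) * norm z" by (rule norm_cauchy_schwarz)
      have SB: "- h * (norm (a - b))\<^sup>2 / 4 - (a - b) \<bullet> z / 2 + m / 2 * (norm u)\<^sup>2 \<ge> - 6/100 - 21/800 * ((norm z)\<^sup>2 / (h * d))"
        by (rule scalar_bound[OF h_pos d1 m_pos _ _ norm_ge_zero E norm_ge_zero norm_ge_zero CS])
           (use h_le1 h_le2 in \<open>simp_all add: d_def\<close>)
      define R' where "R' = - 6/100 - 21/800 * ((norm z)\<^sup>2 / (h * d))"
      have RR: "R' \<le> R" using SB Rlow unfolding R'_def by linarith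
      have R'0: "R' \<le> 0"
      proof -
        have "0 \<le> (norm z)\<^sup>2 / (h * d)" using h_pos d1 by (intro divide_nonneg_pos) auto
        thus ?thesis unfolding R'_def by linarith
      qed
      have "1 + R' \<le> mala_alpha p h v x y"
      proof -
        have "1 + R' \<le> exp R'" by (rule exp_ge_add_one_self)
        also have "\<dots> \<le> exp R" using RR by simp
        finally show ?thesis unfolding mala_alpha_def ratio using R'0 by simp
      qed
      moreover have "1 + R' = 47/50 - k * (norm (y - c))\<^sup>2"
        unfolding R'_def k_def z_def using h_pos d1 by (simp add: field_simps)
      ultimately have "47/50 - k * (norm (y - c))\<^sup>2 \<le> mala_alpha p h v x y" by simp
      hence "Gd s c y * (47/50 - k * (norm (y - c))\<^sup>2) \<le> Gd s c y * mala_alpha p h v x y"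
        by (intro mult_left_mono Gd_nonneg)
      thus ?thesis unfolding qG .
    qed
    have I1: "has_bochner_integral lborel (\<lambda>y. Gd s c y) 1" by (rule Gd_int1[OF s0])
    have I2: "has_bochner_integral lborel (\<lambda>y. Gd s c y * (norm (y - c))\<^sup>2) (d * s\<^sup>2)"
      unfolding d_def by (rule Gd_int2[OF s0])
    have I3: "has_bochner_integral lborel (\<lambda>y. Gd s c y * (47/50 - k * (norm (y - c))\<^sup>2)) (47/50 * 1 - k * (d * s\<^sup>2))"
    proof -
      have "has_bochner_integral lborel (\<lambda>y. 47/50 * Gd s c y - k * (Gd s c y * (norm (y - c))\<^sup>2)) (47/50 * 1 - k * (d * s\<^sup>2))"
        by (intro has_bochner_integral_diff has_bochner_integral_mult_right I1 I2)
      thus ?thesis by (simp add: algebra_simps)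
    qed
    have val: "47/50 * 1 - k * (d * s\<^sup>2) = 71 / 80" unfolding k_def s2 using h_pos d1 by (simp add: field_simps)
    define lo where "lo y = Gd s c y * (47/50 - k * (norm (y - c))\<^sup>2)" for y
    have "lo \<in> borel_measurable borel" unfolding lo_def by (intro borel_measurable_times Gd_meas) simp
    hence lo_m: "lo \<in> borel_measurable lborel" by simp
    have lo_int: "integrable lebesgue lo"
      using I3 lo_m unfolding lo_def by (simp add: integrable_completion has_bochner_integral_iff)
    have lo_val: "integral\<^sup>L lebesgue lo = 71 / 80"
      using I3 lo_m val unfolding lo_def by (simp add: integral_completion has_bochner_integral_iff)
    have G_int: "integrable lebesgue (\<lambda>y. Gd s c y)"
      using I1 by (simp add: integrable_completion has_bochner_integral_iff)
    have qa_m: "(\<lambda>y. mala_q h v x y * mala_alpha p h v x y) \<in> borel_measurable lebesgue"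
      by (rule qa_meas[OF h_pos vm pm])
    have qa_int: "integrable lebesgue (\<lambda>y. mala_q h v x y * mala_alpha p h v x y)"
    proof (rule Bochner_Integration.integrable_bound[OF G_int qa_m])
      show "AE y in lebesgue. norm (mala_q h v x y * mala_alpha p h v x y) \<le> norm (Gd s c y)"
      proof (rule AE_I2)
        fix y
        have "mala_q h v x y * mala_alpha p h v x y \<le> mala_q h v x y * 1"
          using alpha01[of y] qnn[of x y] by (intro mult_left_mono) auto
        thus "norm (mala_q h v x y * mala_alpha p h v x y) \<le> norm (Gd s c y)"
          using alpha01[of y] qnn[of x y] qG[of y] by simp
      qed
    qed
    have "71 / 80 = integral\<^sup>L lebesgue lo" using lo_val by simp
    also have "\<dots> \<le> integral\<^sup>L lebesgue (\<lambda>y. mala_q h v x y * mala_alpha p h v x y)"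
      by (rule integral_mono[OF lo_int qa_int]) (simp add: lo_def lower)
    finally show ?thesis unfolding mala_accept_def .
  qed
  have "71 / 80 \<le> (INF x. mala_accept p h v x)"
    by (rule cINF_greatest) (simp, rule bound)
  thus ?thesis by simp
qed

end
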